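(* Let $a,b,c,d\ge0$ with $a+b+c+d=1$, and let $$C=\begin{pmatrix}a&b&c&d\\ d&a&b&c\\ c&d&a&b\\ b&c&d&a\end{pmatrix}.$$ If $C$ is bracelet, then $C$ is unistochastic.
   Context: A bistochastic $N\times N$ matrix $B$ (nonnegative entries, all row and column sums equal to 1) is bracelet if for all $k,l\in\{1,\dots,N\}$ both $2\max_j\sqrt{B_{lj}B_{kj}}\le\sum_{j=1}^N\sqrt{B_{lj}B_{kj}}$ and $2\max_j\sqrt{B_{jk}B_{jl}}\le\sum_{j=1}^N\sqrt{B_{jk}B_{jl}}$. It is unistochastic if there is a unitary $U$ with $B_{ij}=|U_{ij}|^2$ for all $i,j$. *)

theory Defs
  imports "HOL-Analysis.Analysis"
begin

text \<open>N x N matrices are represented as functions nat => nat => _ with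
  indices ranging over {0..<N}.\<close>

definition bistochastic :: "nat \<Rightarrow> (nat \<Rightarrow> nat \<Rightarrow> real) \<Rightarrow> bool" where
  "bistochastic N B \<longleftrightarrow>
     (\<forall>i<N. \<forall>j<N. B i j \<ge> 0) \<and>
     (\<forall>i<N. (\<Sum>j<N. B i j) = 1) \<and>
     (\<forall>j<N. (\<Sum>i<N. B i j) = 1)"

definition bracelet :: "nat \<Rightarrow> (nat \<Rightarrow> nat \<Rightarrow> real) \<Rightarrow> bool" where
  "bracelet N B \<longleftrightarrow> bistochastic N B \<and>
     (\<forall>k<N. \<forall>l<N.
        2 * Max ((\<lambda>j. sqrt (B l j * B k j)) ` {..<N}) \<le> (\<Sum>j<N. sqrt (B l j * B k j)) \<and>
        2 * Max ((\<lambda>j. sqrt (B j k * B j l)) ` {..<N}) \<le> (\<Sum>j<N. sqrt (B j k * B j l)))"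

definition unitary_mat :: "nat \<Rightarrow> (nat \<Rightarrow> nat \<Rightarrow> complex) \<Rightarrow> bool" where
  "unitary_mat N U \<longleftrightarrow>
     (\<forall>i<N. \<forall>k<N. (\<Sum>j<N. U i j * cnj (U k j)) = (if i = k then 1 else 0))"

definition unistochastic :: "nat \<Rightarrow> (nat \<Rightarrow> nat \<Rightarrow> real) \<Rightarrow> bool" where
  "unistochastic N B \<longleftrightarrow>
     (\<exists>U. unitary_mat N U \<and> (\<forall>i<N. \<forall>j<N. B i j = (cmod (U i j))\<^sup>2))"

text \<open>The 4x4 circulant matrix with first row (a,b,c,d): entry (i,j) is the
  ((j - i) mod 4)-th element of [a,b,c,d].\<close>
definition circ4 :: "real \<Rightarrow> real \<Rightarrow> real \<Rightarrow> real \<Rightarrow> nat \<Rightarrow> nat \<Rightarrow> real" where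
  "circ4 a b c d i j = [a, b, c, d] ! ((j + 4 - i mod 4) mod 4)"

end

theory Submission
  imports Defs
begin


lemma sum4: "(\<Sum>j<(4::nat). f j) = f 0 + f 1 + f 2 + f 3"
  by (simp add: numeral_eq_Suc lessThan_Suc ac_simps)
lemma all4: "(\<forall>i<(4::nat). P i) \<longleftrightarrow> P 0 \<and> P 1 \<and> P 2 \<and> P 3"
  by (auto simp: numeral_eq_Suc less_Suc_eq)

lemma constr_unitary:
  fixes X Y Z W u q ui qi Bn :: complex
  assumes cu: "cnj u = ui" and cv: "cnj q = qi" and u0: "u * ui = 1" and v0: "q * qi = 1"
    and cX: "cnj X = X" and cY: "cnj Y = Y" and cZ: "cnj Z = Z" and cW: "cnj W = W"
    and n: "X*X+Y*Y+Z*Z+W*W = 1" and Bd: "Bn = Y*Y+W*W" and B: "Bn \<noteq> 0" and cB: "cnj Bn = Bn"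
  shows "unitary_mat 4 (\<lambda>i j. [[X, Y, Z, W],
      [W, -(X*Y*W+W*W*Z*u+Y*Y*Z*q-X*Y*W*u*q)/Bn, Y * q, -(W*W*X-Y*Z*W*u+Y*Z*W*q+Y*Y*X*u*q)/Bn],
      [Z, W*u, -X, -Y*u],
      [-Y, -(-Y*Y*X-Y*Z*W*u+Y*Z*W*q-W*W*X*u*q)/Bn, W * q, -(-X*Y*W+Y*Y*Z*u+W*W*Z*q+X*Y*W*u*q)/Bn]] ! i ! j)"
  unfolding unitary_mat_def all4 sum4
  apply (simp add: cu cv cX cY cZ cW cB)
  apply (intro conjI)
  apply (simp_all add: field_simps B)
  using n Bd u0 v0 by algebra+


lemma M11_identity:
  fixes x y z w sg dl :: real
  shows "complex_of_real (x*y*w) + complex_of_real (w*w*z) * (cis sg * cis dl)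
     + complex_of_real (y*y*z) * (cis sg * cis (-dl)) - complex_of_real (x*y*w) * (cis sg * cis dl) * (cis sg * cis (-dl))
   = cis sg * Complex (z*(y*y+w*w)* cos dl) (z*(w*w-y*y)* sin dl - 2*x*y*w * sin sg)"
  apply (simp add: complex_eq_iff algebra_simps)
  using sin_cos_squared_add[of dl] sin_cos_squared_add[of sg]
  by algebra

lemma sq_abs_le: fixes a b :: real assumes "\<bar>a\<bar> \<le> b" shows "a^2 \<le> b^2"
  by (metis abs_ge_zero assms power2_abs power_mono)
lemma le_sq_abs: fixes a b :: real assumes "b \<le> \<bar>a\<bar>" "0 \<le> b" shows "b^2 \<le> a^2"
  by (metis assms power2_abs power_mono)

lemma phase_exists:
  fixes x y z w :: real
  assumes x: "x \<ge> 0" and y: "y \<ge> 0" and z: "z \<ge> 0" and w: "w \<ge> 0"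
    and h1: "x*y \<le> y*z + z*w + w*x" and h2: "y*z \<le> x*y + z*w + w*x"
    and h3: "z*w \<le> x*y + y*z + w*x" and h4: "w*x \<le> x*y + y*z + z*w"
  shows "\<exists>sg dl. (z*(y*y+w*w)* cos dl)^2 + (z*(w*w-y*y)* sin dl - 2*x*y*w * sin sg)^2 = (x*(y*y+w*w))^2"
proof -
  define B where "B = y*y+w*w"
  define D where "D = w*w-y*y"
  define p where "p = 2*x*y*w"
  define F where "F = (\<lambda>t::real\<times>real. (z*B* cos (fst t))^2 + (z*D * sin (fst t) - p * snd t)^2)"
  define S where "S = {0..pi/2} \<times> {-1..(1::real)}"
  have cS: "connected S" unfolding S_def
    by (intro convex_connected convex_Times convex_real_interval)
  have contF: "continuous_on S F" unfolding F_def by (intro continuous_intros)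
  have cI: "connected (F ` S)" using connected_continuous_image[OF contF cS] .
  have p0: "p \<ge> 0" using x y w by (simp add: p_def)
  have B0: "B \<ge> 0" by (simp add: B_def)
  have xB0: "x*B \<ge> 0" using x B0 by simp
  have "2*y*w \<le> y*y+w*w" using power2_diff[of y w] zero_le_power2[of "y-w"]
    by (simp add: power2_eq_square)
  then have "x*(2*y*w) \<le> x*(y*y+w*w)" using mult_left_mono x by blast
  then have pB: "p \<le> x*B" unfolding p_def B_def by (simp add: mult.assoc mult.left_commute)
  obtain lo hi where lo: "lo \<in> S" "F lo \<le> (x*B)^2" and hi: "hi \<in> S" "(x*B)^2 \<le> F hi"
  proof (cases "z \<le> x")
    case True
    have "F (0,0) \<le> (x*B)^2" unfolding F_def using True z B0
      by (simp add: power_mono mult_right_mono)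
    moreover have "(0::real,0::real) \<in> S" unfolding S_def by simp
    moreover obtain s0 where "s0 \<in> {-1..1}" "x*B \<le> \<bar>z*D - p * s0\<bar>"
    proof (cases "D \<ge> 0")
      case True
      have yw: "y \<le> w" using True w unfolding D_def
        by (metis diff_ge_0_iff_ge power2_eq_square power2_le_imp_le)
      have "x*(w-y) \<le> z*(w+y)" using h4 by (simp add: algebra_simps)
      then have "x*(w-y)*(w-y) \<le> z*(w+y)*(w-y)"
        using yw by (intro mult_right_mono) auto
      then have "x*B \<le> z*D + p" unfolding B_def D_def p_def by (simp add: algebra_simps)
      then show ?thesis using that[of "-1"] True p0 z by simp
    next
      case False
      have yw: "w \<le> y" using False y unfolding D_def
        by (metis diff_ge_0_iff_ge le_cases power2_eq_square power2_le_imp_le)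
      have "x*(y-w) \<le> z*(w+y)" using h1 by (simp add: algebra_simps)
      then have "x*(y-w)*(y-w) \<le> z*(w+y)*(y-w)"
        using yw by (intro mult_right_mono) auto
      then have "x*B \<le> - z*D + p" unfolding B_def D_def p_def by (simp add: algebra_simps)
      moreover have "z*D \<le> 0" using False z by (simp add: mult_nonneg_nonpos)
      ultimately show ?thesis using that[of "1"] p0 by simp
    qed
    moreover have "(pi/2, s0) \<in> S" using \<open>s0 \<in> _\<close> unfolding S_def by auto
    moreover have "(x*B)^2 \<le> F (pi/2, s0)" unfolding F_def
      using le_sq_abs[OF \<open>x*B \<le> _\<close> xB0] by simp
    ultimately show ?thesis using that by blast
  next
    case False
    have "(x*B)^2 \<le> F (0,0)" unfolding F_def using False x B0
      by (simp add: power_mono mult_right_mono)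
    moreover have "(0::real,0::real) \<in> S" unfolding S_def by simp
    moreover obtain s0 where "s0 \<in> {-1..1}" "\<bar>z*D - p * s0\<bar> \<le> x*B"
    proof (cases "D \<ge> 0")
      case True
      have yw: "y \<le> w" using True w unfolding D_def
        by (metis diff_ge_0_iff_ge power2_eq_square power2_le_imp_le)
      have "z*(w-y) \<le> x*(w+y)" using h3 by (simp add: algebra_simps)
      then have "z*(w-y)*(w+y) \<le> x*(w+y)*(w+y)"
        using yw y by (intro mult_right_mono) auto
      then have "z*D - p \<le> x*B" unfolding B_def D_def p_def by (simp add: algebra_simps)
      moreover have "z*D \<ge> 0" using True z by simp
      ultimately show ?thesis using that[of "1"] pB by simp
    next
      case False
      have yw: "w \<le> y" using False y unfolding D_def
        by (metis diff_ge_0_iff_ge le_cases power2_eq_square power2_le_imp_le)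
      have "z*(y-w) \<le> x*(w+y)" using h2 by (simp add: algebra_simps)
      then have "z*(y-w)*(w+y) \<le> x*(w+y)*(w+y)"
        using yw w by (intro mult_right_mono) auto
      then have "- z*D - p \<le> x*B" unfolding B_def D_def p_def by (simp add: algebra_simps)
      moreover have "z*D \<le> 0" using False z by (simp add: mult_nonneg_nonpos)
      ultimately show ?thesis using that[of "-1"] pB p0 by simp
    qed
    moreover have "(pi/2, s0) \<in> S" using \<open>s0 \<in> _\<close> unfolding S_def by auto
    moreover have "F (pi/2, s0) \<le> (x*B)^2" unfolding F_def
      using sq_abs_le[OF \<open>\<bar>_\<bar> \<le> x*B\<close>] by simp
    ultimately show ?thesis using that by blast
  qed
  have "(x*B)^2 \<in> F ` S"
    using connected_contains_Icc[OF cI imageI[OF lo(1)] imageI[OF hi(1)]] lo(2) hi(2) by auto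
  then obtain t where t: "t \<in> S" "F t = (x*B)^2" by auto
  then have s: "snd t \<in> {-1..1}" unfolding S_def by auto
  show ?thesis
    apply (rule exI[of _ "arcsin (snd t)"], rule exI[of _ "fst t"])
    using t s by (simp add: F_def B_def D_def p_def mult.assoc)
qed


lemma circ_vals: "circ4 a b c d 0 0 = a" "circ4 a b c d 0 1 = b" "circ4 a b c d 0 2 = c" "circ4 a b c d 0 3 = d"
  "circ4 a b c d 1 0 = d" "circ4 a b c d 1 1 = a" "circ4 a b c d 1 2 = b" "circ4 a b c d 1 3 = c"
  "circ4 a b c d 2 0 = c" "circ4 a b c d 2 1 = d" "circ4 a b c d 2 2 = a" "circ4 a b c d 2 3 = b"
  "circ4 a b c d 3 0 = b" "circ4 a b c d 3 1 = c" "circ4 a b c d 3 2 = d" "circ4 a b c d 3 3 = a"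
  by (simp_all add: circ4_def)

lemma rownorm:
  assumes "unitary_mat N U" "i < N"
  shows "(\<Sum>j<N. (cmod (U i j))^2) = 1"
proof -
  have "(\<Sum>j<N. U i j * cnj (U i j)) = 1" using assms unfolding unitary_mat_def by auto
  then have "(\<Sum>j<N. complex_of_real ((cmod (U i j))^2)) = 1"
    by (simp only: complex_norm_square)
  then have "complex_of_real (\<Sum>j<N. (cmod (U i j))^2) = 1" by simp
  then show ?thesis using of_real_eq_1_iff by blast
qed


theorem mainTheorem7:
  fixes a b c d :: real
  assumes "a \<ge> 0" "b \<ge> 0" "c \<ge> 0" "d \<ge> 0" "a + b + c + d = 1"
    and "bracelet 4 (circ4 a b c d)"
  shows "unistochastic 4 (circ4 a b c d)"
proof -
  note nn = assms(1-4)
  define x where "x = sqrt a"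
  define y where "y = sqrt b"
  define z where "z = sqrt c"
  define w where "w = sqrt d"
  have x0: "x \<ge> 0" and y0: "y \<ge> 0" and z0: "z \<ge> 0" and w0: "w \<ge> 0"
    using nn by (simp_all add: x_def y_def z_def w_def)
  have xa: "x*x = a" using assms(1) by (simp add: x_def)
  have yb: "y*y = b" using assms(2) by (simp add: y_def)
  have zc: "z*z = c" using assms(3) by (simp add: z_def)
  have wd: "w*w = d" using assms(4) by (simp add: w_def)
  have br: "\<forall>k<4. \<forall>l<4.
        2 * Max ((\<lambda>j. sqrt (circ4 a b c d l j * circ4 a b c d k j)) ` {..<4}) \<le> (\<Sum>j<4. sqrt (circ4 a b c d l j * circ4 a b c d k j))"
    using assms(6) unfolding bracelet_def by blast
  define g where "g = (\<lambda>j. sqrt (circ4 a b c d 1 j * circ4 a b c d 0 j))"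
  have gM: "2 * Max (g ` {..<4}) \<le> (\<Sum>j<4. g j)" using br unfolding g_def by auto
  have gle: "g j \<le> Max (g ` {..<4})" if "j < 4" for j
    using that by (intro Max_ge) auto
  have g0: "g 0 = w*x" and g1: "g 1 = x*y" and g2: "g 2 = y*z" and g3: "g 3 = z*w"
    unfolding g_def by (simp_all add: circ4_def x_def y_def z_def w_def real_sqrt_mult)
  have gs: "(\<Sum>j<4. g j) = w*x + x*y + y*z + z*w" unfolding sum4 g0 g1 g2 g3 by simp
  have m0: "g 0 \<le> Max (g ` {..<4})" by (rule gle) simp
  have m1: "g 1 \<le> Max (g ` {..<4})" by (rule gle) simp
  have m2: "g 2 \<le> Max (g ` {..<4})" by (rule gle) simp
  have m3: "g 3 \<le> Max (g ` {..<4})" by (rule gle) simp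
  have h1: "x*y \<le> y*z + z*w + w*x" using gM m1 gs g1 by linarith
  have h2: "y*z \<le> x*y + z*w + w*x" using gM m2 gs g2 by linarith
  have h3: "z*w \<le> x*y + y*z + w*x" using gM m3 gs g3 by linarith
  have h4: "w*x \<le> x*y + y*z + z*w" using gM m0 gs g0 by linarith
  show ?thesis
  proof (cases "b + d = 0")
    case True
    then have "b = 0" "d = 0" using nn by auto
    define g' where "g' = (\<lambda>j. sqrt (circ4 a b c d 0 j * circ4 a b c d 0 j))"
    have "2 * Max (g' ` {..<4}) \<le> (\<Sum>j<4. g' j)"
      using br zero_less_numeral[where 'a=nat and n="num.Bit0 (num.Bit0 num.One)"] unfolding g'_def by blast
    moreover have "g' 0 \<le> Max (g' ` {..<4})" "g' 2 \<le> Max (g' ` {..<4})" by (intro Max_ge; simp)+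
    moreover have "g' 0 = a" "g' 2 = c" unfolding g'_def using nn by (simp_all add: circ4_def)
    moreover have "(\<Sum>j<4. g' j) = 1" unfolding sum4 g'_def using nn assms(5) by (simp add: circ4_def)
    ultimately have a2: "2 * a \<le> 1" and c2: "2 * c \<le> 1" by linarith+
    have ac: "a = 1/2" "c = 1/2" using a2 c2 assms(5) \<open>b = 0\<close> \<open>d = 0\<close> by linarith+
    define X where "X = complex_of_real x"
    have cX: "cnj X = X" by (simp add: X_def)
    have XX: "X * X = 1/2" unfolding X_def using xa ac
      by (metis of_real_divide of_real_mult of_real_1 of_real_numeral)
    define U where "U = (\<lambda>i j. [[X, 0, X, 0], [0, X, 0, X], [X, 0, -X, 0], [0, X, 0, -X]] ! i ! j)"
    have "unitary_mat 4 U"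
      unfolding unitary_mat_def all4 sum4 U_def
      by (simp add: cX XX)
    moreover have "\<forall>i<4. \<forall>j<4. circ4 a b c d i j = (cmod (U i j))\<^sup>2"
      unfolding all4 U_def X_def using \<open>b = 0\<close> \<open>d = 0\<close> ac xa x0
      by (simp add: circ4_def power2_eq_square)
    ultimately show ?thesis unfolding unistochastic_def by blast
  next
    case False
    obtain sg dl where E: "(z*(y*y+w*w)* cos dl)^2 + (z*(w*w-y*y)* sin dl - 2*x*y*w * sin sg)^2 = (x*(y*y+w*w))^2"
      using phase_exists[OF x0 y0 z0 w0 h1 h2 h3 h4] by blast
    define u where "u = cis sg * cis dl"
    define q where "q = cis sg * cis (-dl)"
    define X where "X = complex_of_real x"
    define Y where "Y = complex_of_real y"
    define Z where "Z = complex_of_real z"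
    define W where "W = complex_of_real w"
    define Bn where "Bn = complex_of_real (b+d)"
    have BnYW: "Bn = Y*Y+W*W" unfolding Bn_def Y_def W_def using yb wd by (simp flip: of_real_mult)
    have Bn0: "Bn \<noteq> 0" using False unfolding Bn_def by (metis of_real_eq_0_iff)
    have cmu: "cmod u = 1" "cmod q = 1" by (simp_all add: u_def q_def norm_mult)
    have uu: "u * cnj u = 1" "q * cnj q = 1"
      using complex_norm_square[of u] complex_norm_square[of q] cmu by simp_all
    define M11 where "M11 = X*Y*W+W*W*Z*u+Y*Y*Z*q-X*Y*W*u*q"
    define M12 where "M12 = W*W*X-Y*Z*W*u+Y*Z*W*q+Y*Y*X*u*q"
    define M21 where "M21 = -Y*Y*X-Y*Z*W*u+Y*Z*W*q-W*W*X*u*q"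
    define M22 where "M22 = -X*Y*W+Y*Y*Z*u+W*W*Z*q+X*Y*W*u*q"
    define U where "U = (\<lambda>i j. [[X, Y, Z, W], [W, -M11/Bn, Y * q, -M12/Bn], [Z, W*u, -X, -Y*u],
      [-Y, -M21/Bn, W * q, -M22/Bn]] ! i ! j)"
    have unit: "unitary_mat 4 U"
      unfolding U_def M11_def M12_def M21_def M22_def
      by (rule constr_unitary[OF refl refl uu(1) uu(2) _ _ _ _ _ BnYW Bn0])
         (simp_all add: X_def Y_def Z_def W_def Bn_def, use xa yb zc wd assms(5) in \<open>simp flip: of_real_mult of_real_add\<close>)
    have M11e: "M11 = cis sg * Complex (z*(y*y+w*w)* cos dl) (z*(w*w-y*y)* sin dl - 2*x*y*w * sin sg)"
      unfolding M11_def X_def Y_def Z_def W_def u_def q_def M11_identity[symmetric]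
      by (simp add: algebra_simps)
    have cM11: "cmod M11 = x*(b+d)"
      unfolding M11e norm_mult using E x0 yb wd nn by (simp add: cmod_def)
    have M22e: "M22 = u*q*cnj M11"
      unfolding M22_def M11_def X_def Y_def Z_def W_def using uu
      by simp algebra
    have cM22: "cmod M22 = x*(b+d)" unfolding M22e norm_mult using cmu cM11 by simp
    have r1: "(\<Sum>j<4. (cmod (U 1 j))^2) = 1" using rownorm[OF unit] by simp
    have r3: "(\<Sum>j<4. (cmod (U 3 j))^2) = 1" using rownorm[OF unit] by simp
    have cB: "cmod Bn = b+d" using nn unfolding Bn_def norm_of_real by simp
    have xsq: "x^2 = a" "y^2 = b" "z^2 = c" "w^2 = d" using xa yb zc wd by (simp_all add: power2_eq_square)
    have Bpos: "b + d > 0" using False nn by simp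
    have e00: "(cmod (U 0 0))^2 = a" "(cmod (U 0 1))^2 = b" "(cmod (U 0 2))^2 = c" "(cmod (U 0 3))^2 = d"
      by (simp_all add: U_def X_def Y_def Z_def W_def xsq x0 y0 z0 w0)
    have e20: "(cmod (U 2 0))^2 = c" "(cmod (U 2 1))^2 = d" "(cmod (U 2 2))^2 = a" "(cmod (U 2 3))^2 = b"
      by (simp_all add: U_def X_def Y_def Z_def W_def xsq x0 y0 z0 w0 norm_mult cmu)
    have e10: "(cmod (U 1 0))^2 = d" "(cmod (U 1 2))^2 = b"
      by (simp_all add: U_def X_def Y_def Z_def W_def xsq x0 y0 z0 w0 norm_mult cmu)
    have e30: "(cmod (U 3 0))^2 = b" "(cmod (U 3 2))^2 = d"
      by (simp_all add: U_def X_def Y_def Z_def W_def xsq x0 y0 z0 w0 norm_mult cmu)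
    have e11: "(cmod (U 1 1))^2 = a"
      using Bpos by (simp add: U_def norm_divide cM11 cB xsq)
    have e33: "(cmod (U 3 3))^2 = a"
      using Bpos by (simp add: U_def norm_divide cM22 cB xsq)
    have e13: "(cmod (U 1 3))^2 = c"
      using r1 e10 e11 assms(5) unfolding sum4 by simp
    have e31: "(cmod (U 3 1))^2 = c"
      using r3 e30 e33 assms(5) unfolding sum4 by simp
    have "\<forall>i<4. \<forall>j<4. circ4 a b c d i j = (cmod (U i j))\<^sup>2"
      unfolding all4 circ_vals using e00 e20 e10 e30 e11 e33 e13 e31 by simp
    with unit show ?thesis unfolding unistochastic_def by blast
  qed
qed

end
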